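(* Let $P\subset\mathbb R^d$ be a rational $d$-polytope with irredundant presentation $P=\bigcap_{i=1}^m H^{\ge}_{\bm a_i,b_i}$, $(\bm a_i,b_i)\in\mathbb Z^{d+1}$ primitive, and let $\mathcal C_P\subset\mathbb R^{d+1}$ be the cone generated by $\{(\bm x,1):\bm x\in P\}$. For $\bm u,\bm v\in\mathbb R^d$ the following are equivalent: (1) $(\mathcal C_P+(\bm u,0))\cap\mathbb Z^{d+1}=(\mathcal C_P+(\bm v,0))\cap\mathbb Z^{d+1}$; (2) $\lceil(\bm a_i,\bm u)\rceil=\lceil(\bm a_i,\bm v)\rceil$ for all $i=1,\dots,m$ (i.e. $\bm u$ and $\bm v$ lie in the same upper region of $\Lambda_P$).
   Context: $H^{\ge}_{\bm a,b}=\{\bm x\in\mathbb R^d:(\bm a,\bm x)\ge b\}$. For $\bm c\in\mathbb Z^m$, the upper region is $U_{\bm c}=\{\bm x\in\mathbb R^d: c_i-1<(\bm a_i,\bm x)\le c_i \text{ for all } i\}$, and $\Lambda_P$ is the set of upper regions; they partition $\mathbb R^d$. *)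

theory Defs
  imports "HOL-Analysis.Analysis"
begin

definition rvec :: "int^'n \<Rightarrow> real^'n" where
  "rvec a = (\<chi> j. real_of_int (a $ j))"

definition polyh :: "nat \<Rightarrow> (nat \<Rightarrow> int^'n) \<Rightarrow> (nat \<Rightarrow> int) \<Rightarrow> (real^'n) set" where
  "polyh m a b = {x. \<forall>i<m. rvec (a i) \<bullet> x \<ge> real_of_int (b i)}"

definition irredundant :: "nat \<Rightarrow> (nat \<Rightarrow> int^'n) \<Rightarrow> (nat \<Rightarrow> int) \<Rightarrow> bool" where
  "irredundant m a b \<longleftrightarrow>
     (\<forall>k<m. {x. \<forall>i<m. i \<noteq> k \<longrightarrow> rvec (a i) \<bullet> x \<ge> real_of_int (b i)} \<noteq> polyh m a b)"

definition primitive :: "int^'n \<Rightarrow> int \<Rightarrow> bool" where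
  "primitive a b \<longleftrightarrow> (\<forall>k::int. (\<forall>j. k dvd a $ j) \<and> k dvd b \<longrightarrow> is_unit k)"

definition coneP :: "(real^'n) set \<Rightarrow> ((real^'n) \<times> real) set" where
  "coneP P = convex_cone hull ((\<lambda>x. (x, 1)) ` P)"

definition lattice_pts :: "((real^'n) \<times> real) set" where
  "lattice_pts = {p. (\<forall>j. fst p $ j \<in> \<int>) \<and> snd p \<in> \<int>}"

end

theory Submission
  imports Defs
begin

lemma bezout_prim:
  fixes a :: "int^'n" and b :: int
  assumes "primitive a b"
  shows "\<exists>w::int^'n. \<exists>s. (\<Sum>j\<in>UNIV. a$j * w$j) + b * s = 1"
proof -
  define S where "S = {l. \<exists>w::int^'n. \<exists>s. l = (\<Sum>j\<in>UNIV. a$j * w$j) + b * s}"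
  have cl: "l1 - q*l2 \<in> S" if h: "l1 \<in> S" "l2 \<in> S" for l1 l2 q
  proof -
    obtain w1 s1 where 1: "l1 = (\<Sum>j\<in>UNIV. a$j * w1$j) + b * s1" using h(1) S_def by auto
    obtain w2 s2 where 2: "l2 = (\<Sum>j\<in>UNIV. a$j * w2$j) + b * s2" using h(2) S_def by auto
    have "l1 - q*l2 = (\<Sum>j\<in>UNIV. a$j * (\<chi> i. w1$i - q * w2$i)$j) + b*(s1 - q * s2)"
      by (simp add: 1 2 algebra_simps sum_subtractf sum_distrib_left)
    then show ?thesis unfolding S_def by blast
  qed
  have aS: "a$j \<in> S" for j
  proof -
    have "a$j = (\<Sum>i\<in>UNIV. a$i * (\<chi> i. if i = j then 1 else 0)$i) + b*0"
      by (simp add: if_distrib cong: if_cong)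
    then show ?thesis unfolding S_def by blast
  qed
  have bS: "b \<in> S"
  proof -
    have "b = (\<Sum>i\<in>UNIV. a$i * (0::int^'n)$i) + b*1" by simp
    then show ?thesis unfolding S_def by blast
  qed
  have 0: "0 \<in> S" using cl[OF bS bS, of 1] by simp
  have "\<exists>l\<in>S. l \<noteq> 0"
  proof (rule ccontr)
    assume "\<not> ?thesis"
    then have "\<forall>j. a$j = 0" "b = 0" using aS bS by auto
    then have "is_unit (2::int)" using assms unfolding primitive_def by auto
    then show False by simp
  qed
  then obtain l where l: "l \<in> S" "l \<noteq> 0" by blast
  have "\<bar>l\<bar> \<in> S" using cl[OF 0 l(1), of 1] l(1) by (cases "l \<ge> 0") auto
  then have ex: "\<exists>n::nat. n > 0 \<and> int n \<in> S" using l(2) by (intro exI[of _ "nat \<bar>l\<bar>"]) auto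
  define g where "g = (LEAST n::nat. n > 0 \<and> int n \<in> S)"
  have g: "g > 0" "int g \<in> S" using LeastI_ex[OF ex] unfolding g_def by auto
  have dv: "int g dvd x" if "x \<in> S" for x
  proof -
    have m: "x mod int g \<in> S" using cl[OF that g(2), of "x div int g"]
      by (simp only: minus_div_mult_eq_mod)
    have r: "0 \<le> x mod int g" "x mod int g < int g" using g(1) by auto
    show ?thesis
    proof (rule ccontr)
      assume "\<not> ?thesis"
      then have "x mod int g \<noteq> 0" by (simp add: dvd_eq_mod_eq_0)
      then have "nat (x mod int g) > 0 \<and> int (nat (x mod int g)) \<in> S" using r m by auto
      then have "g \<le> nat (x mod int g)" unfolding g_def by (rule Least_le)
      then show False using r by linarith
    qed
  qed
  have "(\<forall>j. int g dvd a $ j) \<and> int g dvd b" using aS bS dv by blast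
  then have "is_unit (int g)" using assms unfolding primitive_def by blast
  then have "g = 1" by simp
  then have "1 \<in> S" using g by simp
  then obtain w s where "1 = (\<Sum>j\<in>UNIV. a$j * w$j) + b * s" unfolding S_def by blast
  then show ?thesis by (intro exI[of _ w] exI[of _ s]) simp
qed

lemma round_pt:
  fixes x :: "real^'n" and \<alpha> :: "nat \<Rightarrow> real^'n" and \<beta> :: "nat \<Rightarrow> real"
  assumes fin: "finite I" and pos: "\<And>i. i \<in> I \<Longrightarrow> \<alpha> i \<bullet> x > \<beta> i"
  shows "\<exists>z q. (\<forall>j. z$j \<in> \<int>) \<and> q \<in> \<int> \<and> q \<ge> 1 \<and> (\<forall>i\<in>I. \<alpha> i \<bullet> z > \<beta> i * q)"
proof -
  have ev: "eventually (\<lambda>n::nat. real n * (\<alpha> i \<bullet> x - \<beta> i) > (\<Sum>j\<in>UNIV. \<bar>\<alpha> i $ j\<bar>)) sequentially"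
    if "i \<in> I" for i
  proof -
    define d where "d = \<alpha> i \<bullet> x - \<beta> i"
    define A where "A = (\<Sum>j\<in>UNIV. \<bar>\<alpha> i $ j\<bar>)"
    have d: "d > 0" using pos[OF that] d_def by simp
    show ?thesis unfolding eventually_sequentially d_def[symmetric] A_def[symmetric]
    proof (intro exI[of _ "nat \<lceil>A / d\<rceil> + 1"] allI impI)
      fix n assume h: "nat \<lceil>A / d\<rceil> + 1 \<le> n"
      have "A / d \<le> real (nat \<lceil>A / d\<rceil>)" by (rule real_nat_ceiling_ge)
      moreover have "real (nat \<lceil>A / d\<rceil> + 1) \<le> real n" using h by (simp only: of_nat_le_iff)
      ultimately have "A / d < real n" by (simp only: of_nat_add of_nat_1)
      then show "A < real n * d" using d by (simp add: field_simps)
    qed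
  qed
  have "eventually (\<lambda>n::nat. \<forall>i\<in>I. real n * (\<alpha> i \<bullet> x - \<beta> i) > (\<Sum>j\<in>UNIV. \<bar>\<alpha> i $ j\<bar>)) sequentially"
    using ev by (intro eventually_ball_finite[OF fin]) auto
  then obtain N where N: "\<And>n. n \<ge> N \<Longrightarrow> \<forall>i\<in>I. real n * (\<alpha> i \<bullet> x - \<beta> i) > (\<Sum>j\<in>UNIV. \<bar>\<alpha> i $ j\<bar>)"
    unfolding eventually_sequentially by blast
  define n where "n = N + 1"
  have n: "\<forall>i\<in>I. real n * (\<alpha> i \<bullet> x - \<beta> i) > (\<Sum>j\<in>UNIV. \<bar>\<alpha> i $ j\<bar>)" using N[of n] n_def by simp
  define z :: "real^'n" where "z = (\<chi> j. (of_int \<lfloor>real n * x$j\<rfloor> :: real))"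
  define e where "e j = z$j - real n * x$j" for j
  have e: "\<bar>e j\<bar> \<le> 1" for j
  proof -
    have "of_int \<lfloor>real n * x$j\<rfloor> \<le> real n * x$j" by (rule of_int_floor_le)
    moreover have "real n * x$j < of_int \<lfloor>real n * x$j\<rfloor> + 1" by (rule real_of_int_floor_add_one_gt)
    moreover have "e j = of_int \<lfloor>real n * x$j\<rfloor> - real n * x$j" by (simp add: e_def z_def)
    ultimately show ?thesis unfolding abs_le_iff by linarith
  qed
  have "\<beta> i * real n < \<alpha> i \<bullet> z" if "i \<in> I" for i
  proof -
    have eq: "\<alpha> i \<bullet> z - \<beta> i * real n = real n * (\<alpha> i \<bullet> x - \<beta> i) + (\<Sum>j\<in>UNIV. \<alpha> i$j * e j)"
      unfolding inner_vec_def e_def inner_real_def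
      by (simp add: algebra_simps sum_subtractf sum_distrib_left)
    have "\<bar>\<Sum>j\<in>UNIV. \<alpha> i$j * e j\<bar> \<le> (\<Sum>j\<in>UNIV. \<bar>\<alpha> i $ j\<bar>)"
    proof (rule order_trans[OF sum_abs], rule sum_mono)
      fix j
      have "\<bar>\<alpha> i $ j\<bar> * \<bar>e j\<bar> \<le> \<bar>\<alpha> i $ j\<bar>" using e[of j] by (simp add: mult_left_le)
      then show "\<bar>\<alpha> i $ j * e j\<bar> \<le> \<bar>\<alpha> i $ j\<bar>" by (simp add: abs_mult)
    qed
    then show ?thesis using eq n[rule_format, OF that] unfolding abs_le_iff by linarith
  qed
  moreover have "\<forall>j. z$j \<in> \<int>" unfolding z_def by simp
  moreover have "real n \<ge> 1" "real n \<in> \<int>" using n_def by auto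
  ultimately show ?thesis by blast
qed

lemma cone_char:
  fixes A :: "nat \<Rightarrow> real^'n" and c :: "nat \<Rightarrow> real"
  assumes Pdef: "P = {x. \<forall>i<m. A i \<bullet> x \<ge> c i}"
  assumes bd: "bounded P" and ne: "P \<noteq> {}"
  shows "convex_cone hull ((\<lambda>x. (x, 1::real)) ` P) = {(y,t). t \<ge> 0 \<and> (\<forall>i<m. A i \<bullet> y \<ge> c i * t)}"
    (is "?H = ?K")
proof
  have cK: "convex_cone ?K"
    unfolding convex_cone_iff
  proof (intro conjI ballI allI impI)
    show "0 \<in> ?K" by (simp add: zero_prod_def)
  next
    fix p q assume "p \<in> ?K" "q \<in> ?K"
    then show "p + q \<in> ?K"
      by (cases p, cases q) (auto simp: inner_add_right distrib_left intro: add_mono)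
  next
    fix p and s :: real assume "p \<in> ?K" "0 \<le> s"
    then show "s *\<^sub>R p \<in> ?K"
      by (cases p) (auto simp: inner_scaleR_right mult.left_commute intro: mult_left_mono)
  qed
  have "(\<lambda>x. (x, 1::real)) ` P \<subseteq> ?K" by (auto simp: Pdef)
  then show "?H \<subseteq> ?K" using cK by (rule hull_minimal)
next
  show "?K \<subseteq> ?H"
  proof clarify
    fix y :: "real^'n" and t :: real
    assume t: "t \<ge> 0" and h: "\<forall>i<m. c i * t \<le> A i \<bullet> y"
    show "(y, t) \<in> ?H"
    proof (cases "t = 0")
      case False
      then have tp: "t > 0" using t by simp
      define x where "x = (1/t) *\<^sub>R y"
      have "x \<in> P" unfolding Pdef x_def
      proof clarify
        fix i assume "i < m"
        then have "c i * t \<le> A i \<bullet> y" using h by blast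
        then show "c i \<le> A i \<bullet> ((1/t) *\<^sub>R y)" using tp by (simp add: field_simps)
      qed
      then have "(x, 1) \<in> ?H" by (intro hull_inc) auto
      then have "t *\<^sub>R (x, 1) \<in> ?H" using t by (intro convex_cone_scaleR[OF convex_cone_convex_cone_hull])
      moreover have "t *\<^sub>R (x, 1) = (y, t)" using tp by (simp add: x_def)
      ultimately show ?thesis by simp
    next
      case True
      obtain x0 where x0: "x0 \<in> P" using ne by blast
      have y0: "y = 0"
      proof (rule ccontr)
        assume yn: "y \<noteq> 0"
        obtain B where B: "\<And>x. x \<in> P \<Longrightarrow> norm x \<le> B" using bd unfolding bounded_iff by blast
        define s where "s = (B + norm x0 + 1) / norm y"
        have Bx: "B \<ge> norm x0" using B x0 by blast
        have Bp: "0 \<le> B + norm x0 + 1" using Bx norm_ge_zero[of x0] by linarith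
        then have sp: "s \<ge> 0" using yn unfolding s_def by simp
        have "x0 + s *\<^sub>R y \<in> P" unfolding Pdef
        proof clarify
          fix i assume "i < m"
          then have "c i \<le> A i \<bullet> x0" "0 \<le> A i \<bullet> y" using x0 h True unfolding Pdef by auto
          moreover have "0 \<le> s * (A i \<bullet> y)" using sp \<open>0 \<le> A i \<bullet> y\<close> by simp
          ultimately show "c i \<le> A i \<bullet> (x0 + s *\<^sub>R y)" by (simp add: inner_add_right)
        qed
        then have "norm (x0 + s *\<^sub>R y) \<le> B" by (rule B)
        moreover have "norm (s *\<^sub>R y) \<le> norm (x0 + s *\<^sub>R y) + norm x0"
          using norm_triangle_ineq4[of "x0 + s *\<^sub>R y" x0] by simp
        moreover have "norm (s *\<^sub>R y) = B + norm x0 + 1" using Bp yn by (simp add: s_def)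
        ultimately show False by linarith
      qed
      show ?thesis using True y0 convex_cone_hull_contains_0[of "(\<lambda>x. (x, 1::real)) ` P"] by (simp add: zero_prod_def)
    qed
  qed
qed



lemma Ints_pos_ge1: "(x::real) \<in> \<int> \<Longrightarrow> x > 0 \<Longrightarrow> x \<ge> 1"
  by (elim Ints_cases) simp

lemma inner_Ints:
  fixes A z :: "real^'n"
  assumes "\<forall>j. A$j \<in> \<int>" "\<forall>j. z$j \<in> \<int>"
  shows "A \<bullet> z \<in> \<int>"
  unfolding inner_vec_def inner_real_def using assms by (intro Ints_sum Ints_mult) auto

lemma exist_pt:
  fixes A :: "nat \<Rightarrow> real^'n" and c :: "nat \<Rightarrow> real" and C :: "nat \<Rightarrow> int"
  assumes x1: "\<forall>i<m. A i \<bullet> x1 > c i"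
   and y1: "\<forall>i<m. i \<noteq> k \<longrightarrow> A i \<bullet> y \<ge> c i" and y2: "A k \<bullet> y < c k" and k: "k < m"
   and intA: "\<forall>i j. A i $ j \<in> \<int>" and intc: "\<forall>i. c i \<in> \<int>"
   and bez: "\<exists>w s. (\<forall>j. w$j \<in> \<int>) \<and> s \<in> \<int> \<and> A k \<bullet> w - c k * s = 1"
  shows "\<exists>z t. (\<forall>j. z$j\<in>\<int>) \<and> t\<in>\<int> \<and> t \<ge> 0 \<and> A k \<bullet> z - c k * t = of_int (C k)
     \<and> (\<forall>i<m. of_int (C i) \<le> A i \<bullet> z - c i * t)"
proof -
  define L where "L i z t = A i \<bullet> z - c i * t" for i z t
  have lin: "L i (\<alpha> *\<^sub>R z + \<beta> *\<^sub>R z') (\<alpha> * t + \<beta> * t') = \<alpha> * L i z t + \<beta> * L i z' t'" for i z z' t t' \<alpha> \<beta>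
    unfolding L_def by (simp add: inner_add_right algebra_simps)
  have Lint: "L i z t \<in> \<int>" if "\<forall>j. z$j \<in> \<int>" "t \<in> \<int>" for i z t
    unfolding L_def using inner_Ints[of "A i" z] intA intc that by (intro Ints_diff Ints_mult) auto
  define num where "num = c k - A k \<bullet> y"
  define den where "den = A k \<bullet> x1 - A k \<bullet> y"
  have num: "num > 0" using y2 num_def by simp
  have den: "den > num" using x1 k num_def den_def by auto
  define \<epsilon> where "\<epsilon> = num / den / 2"
  have eps: "\<epsilon> > 0" "\<epsilon> < 1" "\<epsilon> * den = num / 2" using num den unfolding \<epsilon>_def by (auto simp: field_simps)
  define xm where "xm = y + \<epsilon> *\<^sub>R (x1 - y)"
  have xmi: "A i \<bullet> xm = (1 - \<epsilon>) * (A i \<bullet> y) + \<epsilon> * (A i \<bullet> x1)" for i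
    unfolding xm_def by (simp add: inner_add_right inner_diff_right algebra_simps)
  have xmk: "A k \<bullet> xm < c k"
  proof -
    have "A k \<bullet> xm = A k \<bullet> y + \<epsilon> * den" unfolding xmi den_def by (simp add: algebra_simps)
    then show ?thesis using eps num num_def by linarith
  qed
  have xmo: "A i \<bullet> xm > c i" if "i < m" "i \<noteq> k" for i
  proof -
    have "(1 - \<epsilon>) * (A i \<bullet> y) \<ge> (1 - \<epsilon>) * c i" using y1 that eps by (intro mult_left_mono) auto
    moreover have "\<epsilon> * (A i \<bullet> x1) > \<epsilon> * c i" using x1 that eps by (intro mult_strict_left_mono) auto
    ultimately show ?thesis unfolding xmi by (simp add: algebra_simps)
  qed
  obtain z1 q1 where z1: "\<forall>j. z1$j \<in> \<int>" "q1 \<in> \<int>" "q1 \<ge> 1" "\<forall>i\<in>{..<m}. A i \<bullet> z1 > c i * q1"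
    using round_pt[where I="{..<m}" and \<alpha>=A and x=x1 and \<beta>=c] x1 by auto
  obtain z2 q2 where z2: "\<forall>j. z2$j \<in> \<int>" "q2 \<in> \<int>" "q2 \<ge> 1"
    "\<forall>i\<in>{..<m}. (\<lambda>i. if i = k then - A k else A i) i \<bullet> z2 > (\<lambda>i. if i = k then - c k else c i) i * q2"
    using round_pt[where I="{..<m}" and \<alpha>="\<lambda>i. if i = k then - A k else A i" and x=xm and \<beta>="\<lambda>i. if i = k then - c k else c i"]
      xmk xmo by fastforce
  have L1: "L i z1 q1 > 0" if "i < m" for i using z1(4) that unfolding L_def by auto
  have L2k: "L k z2 q2 < 0" using z2(4)[rule_format, of k] k unfolding L_def by simp
  have L2: "L i z2 q2 > 0" if "i < m" "i \<noteq> k" for i using z2(4)[rule_format, of i] that unfolding L_def by simp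
  define r1 where "r1 = L k z1 q1"
  define r2 where "r2 = - L k z2 q2"
  have r: "r1 > 0" "r2 > 0" "r1 \<in> \<int>" "r2 \<in> \<int>"
    using L1[OF k] L2k Lint[OF z1(1,2)] Lint[OF z2(1,2)] unfolding r1_def r2_def by auto
  define zD where "zD = r2 *\<^sub>R z1 + r1 *\<^sub>R z2"
  define tD where "tD = r2 * q1 + r1 * q2"
  have zDint: "\<forall>j. zD$j \<in> \<int>" unfolding zD_def using z1 z2 r by auto
  have tDint: "tD \<in> \<int>" unfolding tD_def using z1 z2 r by auto
  have LD: "L i zD tD = r2 * L i z1 q1 + r1 * L i z2 q2" for i unfolding zD_def tD_def by (rule lin)
  have LDk: "L k zD tD = 0" unfolding LD r1_def r2_def by simp
  have LDi: "L i zD tD \<ge> 1" if "i < m" "i \<noteq> k" for i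
  proof -
    have "r2 * L i z1 q1 > 0" using r L1 that by simp
    moreover have "r1 * L i z2 q2 > 0" using r L2 that by simp
    ultimately show ?thesis using Ints_pos_ge1[OF Lint[OF zDint tDint]] LD by simp
  qed
  have tD1: "tD \<ge> 1"
  proof -
    have "r2 * q1 > 0" "r1 * q2 > 0" using r z1 z2 by simp_all
    then show ?thesis using Ints_pos_ge1[OF tDint] tD_def by simp
  qed
  obtain w s where ws: "\<forall>j. w$j \<in> \<int>" "s \<in> \<int>" "L k w s = 1" using bez unfolding L_def by blast
  define z0 where "z0 = of_int (C k) *\<^sub>R w"
  define t0 where "t0 = of_int (C k) * s"
  have z0int: "\<forall>j. z0$j \<in> \<int>" "t0 \<in> \<int>" unfolding z0_def t0_def using ws by auto
  have L0k: "L k z0 t0 = of_int (C k)" unfolding L_def z0_def t0_def using ws(3) unfolding L_def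
    by (simp add: algebra_simps)
  define N where "N = (\<Sum>i<m. \<bar>of_int (C i) - L i z0 t0\<bar>) + \<bar>t0\<bar>"
  have Nint: "N \<in> \<int>" unfolding N_def using Lint[OF z0int] z0int by (intro Ints_add Ints_sum Ints_abs Ints_diff) auto
  have N0: "N \<ge> \<bar>t0\<bar>" unfolding N_def by (simp add: sum_nonneg)
  have Ni: "N \<ge> \<bar>of_int (C i) - L i z0 t0\<bar>" if "i < m" for i
  proof -
    have "\<bar>of_int (C i) - L i z0 t0\<bar> \<le> (\<Sum>i<m. \<bar>of_int (C i) - L i z0 t0\<bar>)"
      using that by (intro member_le_sum) auto
    then show ?thesis unfolding N_def by simp
  qed
  have Nnn: "N \<ge> 0" using N0 by simp
  define z where "z = z0 + N *\<^sub>R zD"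
  define t where "t = t0 + N * tD"
  have Lz: "L i z t = L i z0 t0 + N * L i zD tD" for i
    using lin[of i 1 z0 N zD t0 tD] unfolding z_def t_def by simp
  have "(\<forall>j. z$j\<in>\<int>)" unfolding z_def using z0int zDint Nint by auto
  moreover have "t \<in> \<int>" unfolding t_def using z0int tDint Nint by auto
  moreover have "t \<ge> 0"
  proof -
    have "N * tD \<ge> N * 1" using tD1 Nnn by (intro mult_left_mono) auto
    then show ?thesis unfolding t_def using N0 by linarith
  qed
  moreover have "L k z t = of_int (C k)" using Lz[of k] LDk L0k by simp
  moreover have "of_int (C i) \<le> L i z t" if "i < m" for i
  proof (cases "i = k")
    case True then show ?thesis using Lz[of k] LDk L0k by simp
  next
    case False
    have "N * L i zD tD \<ge> N * 1" using LDi[OF that False] Nnn by (intro mult_left_mono) auto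
    then show ?thesis using Lz[of i] Ni[OF that] by linarith
  qed
  ultimately show ?thesis unfolding L_def by blast
qed


lemma int_ceil_le: "(r::real) \<in> \<int> \<Longrightarrow> (x \<le> r \<longleftrightarrow> of_int \<lceil>x\<rceil> \<le> r)"
  by (elim Ints_cases) (simp add: ceiling_le_iff)

theorem mainTheorem3:
  fixes m :: nat and a :: "nat \<Rightarrow> int^'n" and b :: "nat \<Rightarrow> int"
    and u v :: "real^'n"
  assumes bounded: "bounded (polyh m a b)"
    and full_dim: "aff_dim (polyh m a b) = int CARD('n)"
    and irred: "irredundant m a b"
    and prim: "\<forall>i<m. primitive (a i) (b i)"
  shows "((\<lambda>p. p + (u, 0)) ` coneP (polyh m a b) \<inter> lattice_pts
            = (\<lambda>p. p + (v, 0)) ` coneP (polyh m a b) \<inter> lattice_pts)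
         \<longleftrightarrow> (\<forall>i<m. \<lceil>rvec (a i) \<bullet> u\<rceil> = \<lceil>rvec (a i) \<bullet> v\<rceil>)"
proof -
  define A where "A i = rvec (a i)" for i
  define c where "c i = real_of_int (b i)" for i
  define P where "P = polyh m a b"
  have Pdef: "P = {x. \<forall>i<m. A i \<bullet> x \<ge> c i}" unfolding P_def polyh_def A_def c_def by simp
  have ne: "P \<noteq> {}" using full_dim unfolding P_def by auto
  have intA: "\<forall>i j. A i $ j \<in> \<int>" unfolding A_def rvec_def by simp
  have intc: "\<forall>i. c i \<in> \<int>" unfolding c_def by simp
  have cone: "coneP P = {(y,t). t \<ge> 0 \<and> (\<forall>i<m. A i \<bullet> y \<ge> c i * t)}"
    unfolding coneP_def using cone_char[OF Pdef] bounded ne unfolding P_def by simp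
  define S where "S w = {(z,t). (\<forall>j. z$j \<in> \<int>) \<and> t \<in> \<int> \<and> t \<ge> 0 \<and>
      (\<forall>i<m. of_int \<lceil>A i \<bullet> w\<rceil> \<le> A i \<bullet> z - c i * t)}" for w
  have Lint: "A i \<bullet> z - c i * t \<in> \<int>" if "\<forall>j. z$j \<in> \<int>" "t \<in> \<int>" for i z t
    using inner_Ints[of "A i" z] intA intc that by (intro Ints_diff Ints_mult) auto
  have char: "(\<lambda>p. p + (w, 0)) ` coneP P \<inter> lattice_pts = S w" for w
  proof (intro set_eqI)
    fix p :: "(real^'n) \<times> real"
    obtain z t where p: "p = (z, t)" by (cases p)
    have img: "p \<in> (\<lambda>p. p + (w, 0)) ` coneP P \<longleftrightarrow> (z - w, t) \<in> coneP P"
    proof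
      assume "p \<in> (\<lambda>p. p + (w, 0)) ` coneP P"
      then obtain q where "q \<in> coneP P" "p = q + (w, 0)" by blast
      then show "(z - w, t) \<in> coneP P" using p by (cases q) auto
    next
      assume "(z - w, t) \<in> coneP P"
      moreover have "p = (z - w, t) + (w, 0)" using p by simp
      ultimately show "p \<in> (\<lambda>p. p + (w, 0)) ` coneP P" by blast
    qed
    show "p \<in> (\<lambda>p. p + (w, 0)) ` coneP P \<inter> lattice_pts \<longleftrightarrow> p \<in> S w"
    proof (cases "(\<forall>j. z$j \<in> \<int>) \<and> t \<in> \<int>")
      case True
      have "(c i * t \<le> A i \<bullet> (z - w)) \<longleftrightarrow> of_int \<lceil>A i \<bullet> w\<rceil> \<le> A i \<bullet> z - c i * t" for i
      proof -
        have "(c i * t \<le> A i \<bullet> (z - w)) \<longleftrightarrow> A i \<bullet> w \<le> A i \<bullet> z - c i * t"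
          by (auto simp: inner_diff_right)
        also have "\<dots> \<longleftrightarrow> of_int \<lceil>A i \<bullet> w\<rceil> \<le> A i \<bullet> z - c i * t"
          using True Lint by (intro int_ceil_le) auto
        finally show ?thesis .
      qed
      then show ?thesis using True unfolding Int_iff img unfolding p cone S_def lattice_pts_def by auto
    next
      case False
      then show ?thesis unfolding p S_def lattice_pts_def by auto
    qed
  qed
  have key: "\<lceil>A k \<bullet> w'\<rceil> \<le> \<lceil>A k \<bullet> w\<rceil>" if sub: "S w \<subseteq> S w'" and k: "k < m" for k w w'
  proof -
    obtain x1 where x1: "x1 \<in> interior P"
    proof -
      have "P = (\<Inter>i\<in>{..<m}. {x. A i \<bullet> x \<ge> c i})" unfolding Pdef by auto
      then have cP: "convex P" by (simp add: convex_INT convex_halfspace_ge)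
      have "rel_interior P \<noteq> {}" using rel_interior_eq_empty[OF cP] ne by simp
      moreover have "interior P = rel_interior P"
        using interior_rel_interior_gen[of P] full_dim unfolding P_def by simp
      ultimately show ?thesis using that by auto
    qed
    have x1s: "\<forall>i<m. A i \<bullet> x1 > c i"
    proof (intro allI impI)
      fix i assume i: "i < m"
      obtain e where e: "e > 0" "ball x1 e \<subseteq> P" using x1 mem_interior by blast
      have x1P: "x1 \<in> P" using e by auto
      show "A i \<bullet> x1 > c i"
      proof (cases "A i = 0")
        case True
        have "c i \<le> 0" using x1P i True unfolding Pdef by auto
        moreover have "b i \<noteq> 0"
        proof
          assume b0: "b i = 0"
          have "\<forall>j. a i $ j = 0" using True unfolding A_def rvec_def by (simp add: vec_eq_iff)
          then have "is_unit (2::int)" using prim[rule_format, OF i] b0 unfolding primitive_def by (metis dvd_0_right)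
          then show False by simp
        qed
        ultimately show ?thesis using True unfolding c_def by simp
      next
        case False
        define x' where "x' = x1 - (e / 2 / norm (A i)) *\<^sub>R A i"
        have "dist x1 x' = e / 2" using False e unfolding x'_def dist_norm by simp
        then have "x' \<in> P" using e by auto
        then have "c i \<le> A i \<bullet> x'" using i unfolding Pdef by auto
        also have "A i \<bullet> x' = A i \<bullet> x1 - e / 2 * norm (A i)"
          using False unfolding x'_def by (simp add: inner_diff_right power2_norm_eq_inner[symmetric] power2_eq_square)
        finally have "c i \<le> A i \<bullet> x1 - e / 2 * norm (A i)" .
        moreover have "e / 2 * norm (A i) > 0" using False e by simp
        ultimately show ?thesis by linarith
      qed
    qed
    obtain y where y1: "\<forall>i<m. i \<noteq> k \<longrightarrow> A i \<bullet> y \<ge> c i" and y2: "A k \<bullet> y < c k"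
    proof -
      have "{x. \<forall>i<m. i \<noteq> k \<longrightarrow> rvec (a i) \<bullet> x \<ge> real_of_int (b i)} \<noteq> polyh m a b"
        using irred k unfolding irredundant_def by blast
      moreover have "polyh m a b \<subseteq> {x. \<forall>i<m. i \<noteq> k \<longrightarrow> rvec (a i) \<bullet> x \<ge> real_of_int (b i)}"
        unfolding polyh_def by auto
      ultimately obtain y where "\<forall>i<m. i \<noteq> k \<longrightarrow> A i \<bullet> y \<ge> c i" "y \<notin> P"
        unfolding A_def c_def P_def by blast
      moreover then have "A k \<bullet> y < c k" unfolding Pdef using k by force
      ultimately show ?thesis using that by blast
    qed
    have bez: "\<exists>w s. (\<forall>j. w$j \<in> \<int>) \<and> s \<in> \<int> \<and> A k \<bullet> w - c k * s = 1"
    proof -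
      obtain w0 :: "int^'n" and s0 where ws: "(\<Sum>j\<in>UNIV. a k $ j * w0 $ j) + b k * s0 = 1"
        using bezout_prim prim k by blast
      have "A k \<bullet> rvec w0 - c k * (- of_int s0) = of_int ((\<Sum>j\<in>UNIV. a k $ j * w0 $ j) + b k * s0)"
        unfolding A_def c_def rvec_def inner_vec_def inner_real_def by simp
      then have "A k \<bullet> rvec w0 - c k * (- of_int s0) = 1" using ws by simp
      moreover have "\<forall>j. rvec w0 $ j \<in> \<int>" unfolding rvec_def by simp
      ultimately show ?thesis by (intro exI[of _ "rvec w0"] exI[of _ "- of_int s0 :: real"]) auto
    qed
    obtain z t where zt: "(\<forall>j. z$j\<in>\<int>)" "t\<in>\<int>" "t \<ge> 0"
      "A k \<bullet> z - c k * t = of_int \<lceil>A k \<bullet> w\<rceil>" "\<forall>i<m. of_int \<lceil>A i \<bullet> w\<rceil> \<le> A i \<bullet> z - c i * t"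
      using exist_pt[OF x1s y1 y2 k intA intc bez, of "\<lambda>i. \<lceil>A i \<bullet> w\<rceil>"] by blast
    have "(z, t) \<in> S w" unfolding S_def using zt by auto
    then have "(z, t) \<in> S w'" using sub by blast
    then have "of_int \<lceil>A k \<bullet> w'\<rceil> \<le> A k \<bullet> z - c k * t" unfolding S_def using k by auto
    then show ?thesis using zt(4) by simp
  qed
  have "(S u = S v) \<longleftrightarrow> (\<forall>i<m. \<lceil>A i \<bullet> u\<rceil> = \<lceil>A i \<bullet> v\<rceil>)"
  proof
    assume "S u = S v"
    then show "\<forall>i<m. \<lceil>A i \<bullet> u\<rceil> = \<lceil>A i \<bullet> v\<rceil>" using key by (metis order.antisym order_refl)
  next
    assume h: "\<forall>i<m. \<lceil>A i \<bullet> u\<rceil> = \<lceil>A i \<bullet> v\<rceil>"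
    show "S u = S v" unfolding S_def using h by auto
  qed
  moreover have "(\<lambda>p. p + (u, 0)) ` coneP (polyh m a b) \<inter> lattice_pts = S u" using char[of u] P_def by simp
  moreover have "(\<lambda>p. p + (v, 0)) ` coneP (polyh m a b) \<inter> lattice_pts = S v" using char[of v] P_def by simp
  ultimately show ?thesis unfolding A_def by simp
qed

end
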